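(* Let $G$ and $H$ be two (nonempty) graphs that are not both complete. (i) If $\gamma(G)=1$, then $\mu_t(G+H)=n(G)+n(H)-1$. (ii) If $\gamma(G)\ne 1$ and $\gamma(H)\ne 1$, then $\mu_t(G+H)=n(G)+n(H)-2$.
   Context: All graphs are finite, simple and undirected; $n(G)$ denotes the order and $\gamma(G)$ the domination number of $G$. The join $G+H$ is the graph obtained from disjoint copies of $G$ and $H$ by adding an edge between every vertex of $G$ and every vertex of $H$. Let $F$ be a connected graph and $X\subseteq V(F)$. Two vertices $x,y\in V(F)$ are $X$-visible if there exists a shortest $x,y$-path in $F$ none of whose internal vertices (i.e., vertices other than $x$ and $y$) belongs to $X$. The set $X$ is a total mutual-visibility set of $F$ if every two vertices of $F$ are $X$-visible (the empty set is allowed). The total mutual-visibility number $\mu_t(F)$ is the maximum cardinality of a total mutual-visibility set of $F$. *)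

theory Defs
  imports Main
begin

definition simple_graph :: "'a set \<Rightarrow> ('a \<Rightarrow> 'a \<Rightarrow> bool) \<Rightarrow> bool" where
  "simple_graph V E \<longleftrightarrow> finite V \<and> (\<forall>x y. E x y \<longrightarrow> x \<in> V \<and> y \<in> V)
     \<and> (\<forall>x y. E x y \<longrightarrow> E y x) \<and> (\<forall>x. \<not> E x x)"

definition complete_graph :: "'a set \<Rightarrow> ('a \<Rightarrow> 'a \<Rightarrow> bool) \<Rightarrow> bool" where
  "complete_graph V E \<longleftrightarrow> (\<forall>x\<in>V. \<forall>y\<in>V. x \<noteq> y \<longrightarrow> E x y)"

abbreviation order :: "'a set \<Rightarrow> nat" where
  "order V \<equiv> card V"

definition dominating_set :: "'a set \<Rightarrow> ('a \<Rightarrow> 'a \<Rightarrow> bool) \<Rightarrow> 'a set \<Rightarrow> bool" where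
  "dominating_set V E D \<longleftrightarrow> D \<subseteq> V \<and> (\<forall>v\<in>V. v \<in> D \<or> (\<exists>u\<in>D. E v u))"

definition domination_number :: "'a set \<Rightarrow> ('a \<Rightarrow> 'a \<Rightarrow> bool) \<Rightarrow> nat" where
  "domination_number V E = Min {card D | D. dominating_set V E D}"

definition join_V :: "'a set \<Rightarrow> 'b set \<Rightarrow> ('a + 'b) set" where
  "join_V VG VH = Inl ` VG \<union> Inr ` VH"

fun join_E :: "'a set \<Rightarrow> ('a \<Rightarrow> 'a \<Rightarrow> bool) \<Rightarrow> 'b set \<Rightarrow> ('b \<Rightarrow> 'b \<Rightarrow> bool)
                 \<Rightarrow> ('a + 'b) \<Rightarrow> ('a + 'b) \<Rightarrow> bool" where
  "join_E VG EG VH EH (Inl a) (Inl b) = EG a b"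
| "join_E VG EG VH EH (Inr a) (Inr b) = EH a b"
| "join_E VG EG VH EH (Inl a) (Inr b) = (a \<in> VG \<and> b \<in> VH)"
| "join_E VG EG VH EH (Inr a) (Inl b) = (a \<in> VH \<and> b \<in> VG)"

text \<open>Walks as nonempty vertex lists; length of a walk = length xs - 1.\<close>
definition walk :: "'a set \<Rightarrow> ('a \<Rightarrow> 'a \<Rightarrow> bool) \<Rightarrow> 'a list \<Rightarrow> bool" where
  "walk V E xs \<longleftrightarrow> xs \<noteq> [] \<and> set xs \<subseteq> V \<and> (\<forall>i. Suc i < length xs \<longrightarrow> E (xs ! i) (xs ! Suc i))"

definition walk_between :: "'a set \<Rightarrow> ('a \<Rightarrow> 'a \<Rightarrow> bool) \<Rightarrow> 'a \<Rightarrow> 'a \<Rightarrow> 'a list \<Rightarrow> bool" where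
  "walk_between V E x y xs \<longleftrightarrow> walk V E xs \<and> hd xs = x \<and> last xs = y"

text \<open>A shortest x,y-path: an x,y-walk of minimum length (necessarily a path).\<close>
definition shortest_path :: "'a set \<Rightarrow> ('a \<Rightarrow> 'a \<Rightarrow> bool) \<Rightarrow> 'a \<Rightarrow> 'a \<Rightarrow> 'a list \<Rightarrow> bool" where
  "shortest_path V E x y xs \<longleftrightarrow> walk_between V E x y xs \<and>
     (\<forall>ys. walk_between V E x y ys \<longrightarrow> length xs \<le> length ys)"

definition internal_vertices :: "'a list \<Rightarrow> 'a set" where
  "internal_vertices xs = set (butlast (tl xs))"

definition X_visible :: "'a set \<Rightarrow> ('a \<Rightarrow> 'a \<Rightarrow> bool) \<Rightarrow> 'a set \<Rightarrow> 'a \<Rightarrow> 'a \<Rightarrow> bool" where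
  "X_visible V E X x y \<longleftrightarrow> (\<exists>p. shortest_path V E x y p \<and> internal_vertices p \<inter> X = {})"

definition total_mutual_visibility_set :: "'a set \<Rightarrow> ('a \<Rightarrow> 'a \<Rightarrow> bool) \<Rightarrow> 'a set \<Rightarrow> bool" where
  "total_mutual_visibility_set V E X \<longleftrightarrow> X \<subseteq> V \<and> (\<forall>x\<in>V. \<forall>y\<in>V. X_visible V E X x y)"

definition mu_t :: "'a set \<Rightarrow> ('a \<Rightarrow> 'a \<Rightarrow> bool) \<Rightarrow> nat" where
  "mu_t V E = Max {card X | X. total_mutual_visibility_set V E X}"

end

theory Submission
  imports Defs
begin

lemma walk_len3:
  assumes "walk_between V E x y p" "x \<noteq> y" "\<not> E x y"
  shows "length p \<ge> 3"
proof (rule ccontr)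
  assume "\<not> 3 \<le> length p"
  moreover have "length p \<ge> 1" using assms(1) by (cases p) (simp_all add: walk_between_def walk_def)
  ultimately consider "length p = 1" | "length p = 2" by linarith
  then show False
  proof cases
    case 1
    then obtain a where "p = [a]" by (cases p) auto
    then show False using assms by (auto simp: walk_between_def)
  next
    case 2
    then obtain a b where p: "p = [a,b]" by (cases p; cases "tl p") auto
    have "E (p!0) (p!Suc 0)" using assms(1) 2 unfolding walk_between_def walk_def by auto
    then show False using assms p by (auto simp: walk_between_def)
  qed
qed

lemma walk_len2:
  assumes "walk_between V E x y p" "x \<noteq> y"
  shows "length p \<ge> 2"
proof (rule ccontr)
  assume "\<not> 2 \<le> length p"
  moreover have "length p \<ge> 1" using assms(1) by (cases p) (simp_all add: walk_between_def walk_def)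
  ultimately have "length p = 1" by linarith
  then obtain a where "p = [a]" by (cases p) auto
  then show False using assms by (auto simp: walk_between_def)
qed

lemma walk3:
  assumes "x \<in> V" "y \<in> V" "z \<in> V" "E x z" "E z y"
  shows "walk_between V E x y [x,z,y]"
  using assms unfolding walk_between_def walk_def
  by (auto simp: less_Suc_eq nth_Cons split: nat.splits)

lemma vis_char:
  assumes sup: "\<forall>a b. E a b \<longrightarrow> a\<in>V \<and> b\<in>V"
    and "x\<in>V" "y\<in>V" "x\<noteq>y" "\<not>E x y" "E x z0" "E z0 y"
  shows "X_visible V E X x y \<longleftrightarrow> (\<exists>z. E x z \<and> E z y \<and> z \<notin> X)"
proof
  assume "X_visible V E X x y"
  then obtain p where sp: "shortest_path V E x y p" and int: "internal_vertices p \<inter> X = {}"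
    unfolding X_visible_def by blast
  have "walk_between V E x y [x,z0,y]" using walk3 assms by metis
  with sp have "length p \<le> 3" unfolding shortest_path_def by fastforce
  moreover have "length p \<ge> 3" using walk_len3[of V E x y p] sp assms(4,5) unfolding shortest_path_def by blast
  ultimately have "length p = 3" by simp
  then obtain a b c where p: "p = [a,b,c]"
    by (auto simp: numeral_3_eq_3 length_Suc_conv)
  have w: "walk_between V E x y p" using sp unfolding shortest_path_def by blast
  then have "a = x" "c = y" using p by (auto simp: walk_between_def)
  moreover have "E (p!0) (p!1)" "E (p!1) (p!2)" using w p unfolding walk_between_def walk_def by auto
  moreover have "b \<notin> X" using int p by (simp add: internal_vertices_def)
  ultimately show "\<exists>z. E x z \<and> E z y \<and> z \<notin> X" using p by auto
next
  assume "\<exists>z. E x z \<and> E z y \<and> z \<notin> X"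
  then obtain z where z: "E x z" "E z y" "z \<notin> X" by blast
  have w: "walk_between V E x y [x,z,y]" using walk3 assms z sup by metis
  have "shortest_path V E x y [x,z,y]"
    unfolding shortest_path_def using w walk_len3 assms by fastforce
  moreover have "internal_vertices [x,z,y] \<inter> X = {}" using z by (simp add: internal_vertices_def)
  ultimately show "X_visible V E X x y" unfolding X_visible_def by blast
qed

lemma vis_triv:
  assumes sup: "\<forall>a b. E a b \<longrightarrow> a\<in>V \<and> b\<in>V" and irr: "\<forall>a. \<not> E a a"
    and "x\<in>V" "y\<in>V" "x = y \<or> E x y"
  shows "X_visible V E X x y"
proof (cases "x = y")
  case True
  have "walk_between V E x y [x]" using assms True by (simp add: walk_between_def walk_def)
  then have "shortest_path V E x y [x]" unfolding shortest_path_def walk_between_def walk_def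
    by (auto simp: Suc_le_eq)
  then show ?thesis unfolding X_visible_def internal_vertices_def by force
next
  case False
  then have e: "E x y" using assms by blast
  have "walk_between V E x y [x,y]" using assms e by (auto simp: walk_between_def walk_def less_Suc_eq)
  then have "shortest_path V E x y [x,y]" unfolding shortest_path_def using walk_len2 False by fastforce
  then show ?thesis unfolding X_visible_def internal_vertices_def by force
qed

lemma dom_facts:
  assumes "finite V" "V \<noteq> {}"
  shows "domination_number V E = 1 \<longleftrightarrow> (\<exists>u\<in>V. \<forall>v\<in>V. v = u \<or> E v u)"
proof -
  define S where "S = {card D | D. dominating_set V E D}"
  have fin: "finite S" unfolding S_def
    by (rule finite_subset[of _ "card ` Pow V"]) (auto simp: dominating_set_def assms)
  have ne: "card V \<in> S" unfolding S_def dominating_set_def by auto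
  have ge: "k \<ge> 1" if kS: "k \<in> S" for k
  proof -
    obtain D where D: "k = card D" "dominating_set V E D" using kS unfolding S_def by blast
    have "D \<noteq> {}" using D assms(2) unfolding dominating_set_def by blast
    moreover have "finite D" using D assms(1) finite_subset unfolding dominating_set_def by blast
    ultimately show ?thesis using D by (simp add: Suc_le_eq card_gt_0_iff)
  qed
  have m: "Min S \<in> S" using fin ne Min_in by blast
  show ?thesis
  proof
    assume "domination_number V E = 1"
    then have "1 \<in> S" using m unfolding domination_number_def S_def by simp
    then obtain D where "card D = 1" "dominating_set V E D" unfolding S_def by auto
    then obtain u where "D = {u}" using card_1_singletonE by blast
    then show "\<exists>u\<in>V. \<forall>v\<in>V. v = u \<or> E v u" using \<open>dominating_set V E D\<close>
      unfolding dominating_set_def by auto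
  next
    assume "\<exists>u\<in>V. \<forall>v\<in>V. v = u \<or> E v u"
    then obtain u where "u \<in> V" "\<forall>v\<in>V. v = u \<or> E v u" by blast
    then have "dominating_set V E {u}" unfolding dominating_set_def by auto
    then have "1 \<in> S" unfolding S_def by force
    then have "Min S \<le> 1" using fin by simp
    moreover have "Min S \<ge> 1" using ge m by blast
    ultimately show "domination_number V E = 1" unfolding domination_number_def S_def by simp
  qed
qed

lemma card_join: "finite VG \<Longrightarrow> finite VH \<Longrightarrow> card (join_V VG VH) = card VG + card VH"
  unfolding join_V_def
  by (subst card_Un_disjoint) (auto simp: card_image)

theorem corollary2p7:
  fixes VG :: "'a set" and EG :: "'a \<Rightarrow> 'a \<Rightarrow> bool"
    and VH :: "'b set" and EH :: "'b \<Rightarrow> 'b \<Rightarrow> bool"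
  assumes "simple_graph VG EG" and "simple_graph VH EH"
    and "VG \<noteq> {}" and "VH \<noteq> {}"
    and "\<not> (complete_graph VG EG \<and> complete_graph VH EH)"
  shows "(domination_number VG EG = 1 \<longrightarrow>
            mu_t (join_V VG VH) (join_E VG EG VH EH) = order VG + order VH - 1)
       \<and> (domination_number VG EG \<noteq> 1 \<and> domination_number VH EH \<noteq> 1 \<longrightarrow>
            mu_t (join_V VG VH) (join_E VG EG VH EH) = order VG + order VH - 2)"
proof -
  define V where "V = join_V VG VH"
  define E where "E = join_E VG EG VH EH"
  have fG: "finite VG" and supG: "\<forall>x y. EG x y \<longrightarrow> x \<in> VG \<and> y \<in> VG"
    and symG: "\<forall>x y. EG x y \<longrightarrow> EG y x" and irrG: "\<forall>x. \<not> EG x x"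
    using assms(1) unfolding simple_graph_def by auto
  have fH: "finite VH" and supH: "\<forall>x y. EH x y \<longrightarrow> x \<in> VH \<and> y \<in> VH"
    and symH: "\<forall>x y. EH x y \<longrightarrow> EH y x" and irrH: "\<forall>x. \<not> EH x x"
    using assms(2) unfolding simple_graph_def by auto
  obtain g0 where g0: "g0 \<in> VG" using assms(3) by blast
  obtain h0 where h0: "h0 \<in> VH" using assms(4) by blast
  have finV: "finite V" unfolding V_def join_V_def using fG fH by simp
  have cardV: "card V = card VG + card VH" unfolding V_def using card_join fG fH by blast
  have sup: "\<forall>a b. E a b \<longrightarrow> a \<in> V \<and> b \<in> V"
  proof (intro allI impI)
    fix a b assume "E a b"
    then show "a \<in> V \<and> b \<in> V" unfolding E_def V_def join_V_def
      using supG supH by (cases a; cases b) auto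
  qed
  have irr: "\<forall>a. \<not> E a a"
  proof
    fix a show "\<not> E a a" unfolding E_def using irrG irrH by (cases a) auto
  qed
  have inV: "Inl g \<in> V \<longleftrightarrow> g \<in> VG" "Inr h \<in> V \<longleftrightarrow> h \<in> VH" for g h
    unfolding V_def join_V_def by auto
  have common: "\<exists>z. E x z \<and> E z y" if "x \<in> V" "y \<in> V" "\<not> E x y" for x y
  proof (cases x)
    case xa: (Inl a)
    show ?thesis
    proof (cases y)
      case (Inl b)
      then show ?thesis using xa that h0 inV unfolding E_def by (intro exI[of _ "Inr h0"]) auto
    next
      case (Inr b)
      then show ?thesis using xa that inV unfolding E_def by auto
    qed
  next
    case xa: (Inr a)
    show ?thesis
    proof (cases y)
      case (Inr b)
      then show ?thesis using xa that g0 inV unfolding E_def by (intro exI[of _ "Inl g0"]) auto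
    next
      case (Inl b)
      then show ?thesis using xa that inV unfolding E_def by auto
    qed
  qed
  have tmv: "total_mutual_visibility_set V E X \<longleftrightarrow> X \<subseteq> V \<and>
      (\<forall>x\<in>V. \<forall>y\<in>V. x \<noteq> y \<and> \<not> E x y \<longrightarrow> (\<exists>z. E x z \<and> E z y \<and> z \<notin> X))" for X
  proof -
    have "X_visible V E X x y \<longleftrightarrow> (x \<noteq> y \<and> \<not> E x y \<longrightarrow> (\<exists>z. E x z \<and> E z y \<and> z \<notin> X))"
      if xyV: "x \<in> V" "y \<in> V" for x y
    proof (cases "x \<noteq> y \<and> \<not> E x y")
      case True
      then obtain z0 where "E x z0" "E z0 y" using common xyV by blast
      then show ?thesis using vis_char[OF sup xyV] True by blast
    next
      case False
      then show ?thesis using vis_triv[OF sup irr xyV] by blast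
    qed
    then show ?thesis unfolding total_mutual_visibility_set_def by blast
  qed
  define T where "T = {card X | X. total_mutual_visibility_set V E X}"
  have mu: "mu_t (join_V VG VH) (join_E VG EG VH EH) = Max T"
    unfolding T_def mu_t_def V_def E_def by simp
  have finT: "finite T" unfolding T_def
    by (rule finite_subset[of _ "card ` Pow V"]) (auto simp: total_mutual_visibility_set_def finV)
  have cardX: "card X \<le> card V" if "total_mutual_visibility_set V E X" for X
    using that finV card_mono unfolding total_mutual_visibility_set_def by blast
  obtain p q where pq: "p \<in> V" "q \<in> V" "p \<noteq> q" "\<not> E p q"
  proof -
    show thesis
    proof (cases "complete_graph VG EG")
      case False
      then obtain a b where "a \<in> VG" "b \<in> VG" "a \<noteq> b" "\<not> EG a b"
        unfolding complete_graph_def by blast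
      then show thesis using that[of "Inl a" "Inl b"] inV unfolding E_def by auto
    next
      case True
      then have "\<not> complete_graph VH EH" using assms(5) by blast
      then obtain a b where "a \<in> VH" "b \<in> VH" "a \<noteq> b" "\<not> EH a b"
        unfolding complete_graph_def by blast
      then show thesis using that[of "Inr a" "Inr b"] inV unfolding E_def by auto
    qed
  qed
  have notall: "\<not> total_mutual_visibility_set V E V"
  proof
    assume "total_mutual_visibility_set V E V"
    then have H: "\<forall>x\<in>V. \<forall>y\<in>V. x \<noteq> y \<and> \<not> E x y \<longrightarrow> (\<exists>z. E x z \<and> E z y \<and> z \<notin> V)"
      using tmv[of V] by simp
    have "\<exists>z. E p z \<and> E z q \<and> z \<notin> V" using H pq by simp
    then show False using sup by blast
  qed
  have le1: "card X \<le> card V - 1" if "total_mutual_visibility_set V E X" for X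
  proof -
    have "X \<subseteq> V" using that unfolding total_mutual_visibility_set_def by blast
    moreover have "X \<noteq> V" using that notall by blast
    ultimately have "card X < card V" using finV by (simp add: psubset_card_mono)
    then show ?thesis by simp
  qed
  have part1: "domination_number VG EG = 1 \<longrightarrow> Max T = card V - 1"
  proof
    assume "domination_number VG EG = 1"
    then obtain u where u: "u \<in> VG" "\<forall>v\<in>VG. v = u \<or> EG v u"
      using dom_facts[OF fG assms(3)] by blast
    define X where "X = V - {Inl u}"
    have "total_mutual_visibility_set V E X"
      unfolding tmv
    proof (intro conjI ballI impI)
      show "X \<subseteq> V" unfolding X_def by blast
    next
      fix x y assume xy: "x \<in> V" "y \<in> V" "x \<noteq> y \<and> \<not> E x y"
      have adj: "E w (Inl u)" "E (Inl u) w" if "w \<in> V" "w \<noteq> Inl u" for w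
      proof -
        show "E w (Inl u)"
        proof (cases w)
          case (Inl a) then show ?thesis using that u inV unfolding E_def by auto
        next
          case (Inr a) then show ?thesis using that u inV unfolding E_def by auto
        qed
        show "E (Inl u) w"
        proof (cases w)
          case (Inl a) then show ?thesis using that u inV symG unfolding E_def by auto
        next
          case (Inr a) then show ?thesis using that u inV unfolding E_def by auto
        qed
      qed
      have xu: "x \<noteq> Inl u" using adj(2)[OF xy(2)] xy by blast
      have yu: "y \<noteq> Inl u" using adj(1)[OF xy(1)] xy by blast
      have "E x (Inl u)" using adj(1)[OF xy(1) xu] .
      moreover have "E (Inl u) y" using adj(2)[OF xy(2) yu] .
      ultimately show "\<exists>z. E x z \<and> E z y \<and> z \<notin> X"
        unfolding X_def by (intro exI[of _ "Inl u"]) simp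
    qed
    moreover have "card X = card V - 1" unfolding X_def using finV u inV by simp
    ultimately have "card V - 1 \<in> T" unfolding T_def by force
    moreover have "\<forall>k\<in>T. k \<le> card V - 1" unfolding T_def using le1 by blast
    ultimately show "Max T = card V - 1" using finT by (intro Max_eqI) auto
  qed
  have part2: "domination_number VG EG \<noteq> 1 \<and> domination_number VH EH \<noteq> 1 \<longrightarrow> Max T = card V - 2"
  proof
    assume dn: "domination_number VG EG \<noteq> 1 \<and> domination_number VH EH \<noteq> 1"
    have n1: "\<not> (\<exists>u\<in>VG. \<forall>v\<in>VG. v = u \<or> EG v u)"
      using dom_facts[OF fG assms(3), of EG] dn by argo
    have n2: "\<not> (\<exists>u\<in>VH. \<forall>v\<in>VH. v = u \<or> EH v u)"
      using dom_facts[OF fH assms(4), of EH] dn by argo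
    have ndG: "\<forall>u\<in>VG. \<exists>v\<in>VG. v \<noteq> u \<and> \<not> EG v u" using n1 by blast
    have ndH: "\<forall>u\<in>VH. \<exists>v\<in>VH. v \<noteq> u \<and> \<not> EH v u" using n2 by blast
    have nd: "\<exists>v\<in>V. v \<noteq> w \<and> \<not> E v w \<and> \<not> E w v" if wV: "w \<in> V" for w
    proof (cases w)
      case (Inl a)
      then obtain v where "v \<in> VG" "v \<noteq> a" "\<not> EG v a" using ndG wV inV by blast
      then show ?thesis using Inl inV symG unfolding E_def by (intro bexI[of _ "Inl v"]) auto
    next
      case (Inr a)
      then obtain v where "v \<in> VH" "v \<noteq> a" "\<not> EH v a" using ndH wV inV by blast
      then show ?thesis using Inr inV symH unfolding E_def by (intro bexI[of _ "Inr v"]) auto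
    qed
    define X where "X = V - {Inl g0, Inr h0}"
    have "total_mutual_visibility_set V E X"
      unfolding tmv
    proof (intro conjI ballI impI)
      show "X \<subseteq> V" unfolding X_def by blast
    next
      fix x y assume xy: "x \<in> V" "y \<in> V" "x \<noteq> y \<and> \<not> E x y"
      show "\<exists>z. E x z \<and> E z y \<and> z \<notin> X"
      proof (cases x)
        case (Inl a)
        then obtain b where "y = Inl b" using xy inV unfolding E_def by (cases y) auto
        then show ?thesis using Inl xy inV h0 unfolding E_def X_def by (intro exI[of _ "Inr h0"]) auto
      next
        case (Inr a)
        then obtain b where "y = Inr b" using xy inV unfolding E_def by (cases y) auto
        then show ?thesis using Inr xy inV g0 unfolding E_def X_def by (intro exI[of _ "Inl g0"]) auto
      qed
    qed
    moreover have "card X = card V - 2" unfolding X_def using finV g0 h0 inV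
      by (simp add: card_Diff_subset)
    ultimately have "card V - 2 \<in> T" unfolding T_def by force
    moreover have "\<forall>k\<in>T. k \<le> card V - 2"
    proof
      fix k assume "k \<in> T"
      then obtain X where X: "k = card X" "total_mutual_visibility_set V E X" unfolding T_def by blast
      have XV: "X \<subseteq> V" using X unfolding total_mutual_visibility_set_def by blast
      have "card (V - X) \<ge> 2"
      proof (rule ccontr)
        assume "\<not> card (V - X) \<ge> 2"
        then have "card (V - X) \<le> 1" by simp
        then obtain w where w: "w \<in> V" "V - X \<subseteq> {w}"
        proof (cases "V - X = {}")
          case True then show thesis using that[of "Inl g0"] inV g0 by blast
        next
          case False
          then have "card (V - X) = 1" using \<open>card (V - X) \<le> 1\<close> finV
            by (metis Suc_leI card_gt_0_iff finite_Diff le_antisym One_nat_def)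
          then obtain w where "V - X = {w}" using card_1_singletonE by blast
          then show thesis using that[of w] by blast
        qed
        obtain v where v: "v \<in> V" "v \<noteq> w" "\<not> E v w" "\<not> E w v" using nd w(1) by blast
        then obtain z where "E w z" "E z v" "z \<notin> X" using X(2) tmv w(1) by metis
        then have "z \<in> V" using sup by blast
        with \<open>z \<notin> X\<close> w have "z = w" by blast
        then show False using \<open>E w z\<close> irr by blast
      qed
      moreover have "card (V - X) = card V - card X" using XV finV by (simp add: card_Diff_subset finite_subset)
      ultimately show "k \<le> card V - 2" using X by simp
    qed
    ultimately show "Max T = card V - 2" using finT by (intro Max_eqI) auto
  qed
  show ?thesis using part1 part2 mu cardV by simp
qed

end
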